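(* Let $\mu$ be a pure-state ensemble on $\mathbb{C}^d$ (a probability measure on unit vectors $|\psi\rangle\in\mathbb{C}^d$). For each information value $I$ that is achieved by some measurement procedure, let $D(I)$ be the infimum of the average disturbance $\overline{D}$ over all measurement procedures whose information gain about $\mu$ equals $I$. Then the information-disturbance frontier $I\mapsto D(I)$ is convex (defined on a convex set of achievable information values, with $\lambda D(I_1)+(1-\lambda)D(I_2)\ge D(\lambda I_1+(1-\lambda)I_2)$ for $\lambda\in[0,1]$).
   Context: A measurement procedure on $\mathbb{C}^d$ consists of a finite POVM $\{F_b\}$ (positive semidefinite operators with $\sum_b F_b=I$) together with operators $A_{bi}$ (finitely many for each $b$) satisfying $\sum_i A_{bi}^\dagger A_{bi}=F_b$; outcome $b$ transforms $\rho$ into the unnormalized state $\mathcal{A}_b(\rho)=\sum_i A_{bi}\rho A_{bi}^\dagger$. Given a pure-state ensemble $\mu$: outcome probabilities are $p(b|\psi)=\langle\psi|F_b|\psi\rangle$ and $p(b)=\int d\mu(\psi)\,p(b|\psi)$; the information gain is the mutual information $H(B:\Psi)=H(B)-H(B|\Psi)$ with $H(B)=-\sum_b p(b)\log p(b)$ and $H(B|\Psi)=-\int d\mu(\psi)\sum_b p(b|\psi)\log p(b|\psi)$. The average disturbance is $\overline{D}=1-\int d\mu(\psi)\sum_{b,i}|\langle\psi|A_{bi}|\psi\rangle|^2$. *)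

theory Defs
  imports "HOL-Probability.Probability"
begin

type_synonym 'n cvec = "complex ^ 'n"
type_synonym 'n cmat = "complex ^ 'n ^ 'n"

text \<open>Hermitian inner product on C^d (antilinear in the first argument): <v|w>.\<close>
definition cinner :: "'n::finite cvec \<Rightarrow> 'n cvec \<Rightarrow> complex" where
  "cinner v w = (\<Sum>i\<in>UNIV. cnj (v $ i) * w $ i)"

text \<open>Conjugate transpose (dagger).\<close>
definition adj :: "'n::finite cmat \<Rightarrow> 'n cmat" where
  "adj A = (\<chi> i j. cnj (A $ j $ i))"

text \<open>Positive semidefinite operator: <v|F v> is real and nonnegative for all v.\<close>
definition psd :: "'n::finite cmat \<Rightarrow> bool" where
  "psd F \<longleftrightarrow> (\<forall>v. Im (cinner v (F *v v)) = 0 \<and> Re (cinner v (F *v v)) \<ge> 0)"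

text \<open>A measurement procedure: a finite POVM, given as a list Fs of effects F_b
  (outcomes b = 0..length Fs - 1), together with, for each outcome b, a finite list
  Ks!b of operators A_{bi} with sum_i A_{bi}^dagger A_{bi} = F_b.\<close>
definition meas_proc :: "'n::finite cmat list \<Rightarrow> 'n cmat list list \<Rightarrow> bool" where
  "meas_proc Fs Ks \<longleftrightarrow>
     (\<forall>F\<in>set Fs. psd F) \<and> sum_list Fs = mat 1 \<and>
     length Ks = length Fs \<and>
     (\<forall>b<length Fs. sum_list (map (\<lambda>A. adj A ** A) (Ks ! b)) = Fs ! b)"

text \<open>Pure-state ensemble: a Borel probability measure concentrated on unit vectors.\<close>
definition pure_ensemble :: "'n::finite cvec measure \<Rightarrow> bool" where
  "pure_ensemble \<mu> \<longleftrightarrow> prob_space \<mu> \<and> sets \<mu> = sets borel \<and> (AE \<psi> in \<mu>. norm \<psi> = 1)"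

text \<open>Entropy summand -p log p, with the convention 0 log 0 = 0 (natural log).\<close>
definition ent :: "real \<Rightarrow> real" where
  "ent p = (if p = 0 then 0 else - p * ln p)"

definition cond_prob :: "'n::finite cmat list \<Rightarrow> nat \<Rightarrow> 'n cvec \<Rightarrow> real" where
  "cond_prob Fs b \<psi> = Re (cinner \<psi> ((Fs ! b) *v \<psi>))"

definition out_prob :: "'n::finite cvec measure \<Rightarrow> 'n cmat list \<Rightarrow> nat \<Rightarrow> real" where
  "out_prob \<mu> Fs b = (\<integral>\<psi>. cond_prob Fs b \<psi> \<partial>\<mu>)"

text \<open>Information gain H(B:Psi) = H(B) - H(B|Psi).\<close>
definition info_gain :: "'n::finite cvec measure \<Rightarrow> 'n cmat list \<Rightarrow> real" where
  "info_gain \<mu> Fs =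
     (\<Sum>b<length Fs. ent (out_prob \<mu> Fs b))
     - (\<integral>\<psi>. (\<Sum>b<length Fs. ent (cond_prob Fs b \<psi>)) \<partial>\<mu>)"

text \<open>Average disturbance 1 - int sum_{b,i} |<psi|A_{bi}|psi>|^2 d mu.\<close>
definition avg_disturbance :: "'n::finite cvec measure \<Rightarrow> 'n cmat list list \<Rightarrow> real" where
  "avg_disturbance \<mu> Ks =
     1 - (\<integral>\<psi>. (\<Sum>b<length Ks. sum_list (map (\<lambda>A. (cmod (cinner \<psi> (A *v \<psi>)))\<^sup>2) (Ks ! b))) \<partial>\<mu>)"

text \<open>Achievable information values.\<close>
definition achievable_info :: "'n::finite cvec measure \<Rightarrow> real set" where
  "achievable_info \<mu> = {info_gain \<mu> Fs | Fs Ks. meas_proc Fs Ks}"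

text \<open>Information-disturbance frontier D(I).\<close>
definition frontier :: "'n::finite cvec measure \<Rightarrow> real \<Rightarrow> real" where
  "frontier \<mu> I = Inf {avg_disturbance \<mu> Ks | Fs Ks. meas_proc Fs Ks \<and> info_gain \<mu> Fs = I}"

end

theory Submission
  imports Defs
begin

lemma scR: "r *\<^sub>R (z::complex) = of_real r * z"
  by (rule scaleR_conv_of_real)

lemma cinner_add_right: "cinner v (x + y) = cinner v x + cinner v y"
  by (simp add: cinner_def distrib_left sum.distrib)

lemma cinner_zero_right: "cinner v 0 = 0"
  by (simp add: cinner_def)

lemma cinner_scaleR_right: "cinner v (c *\<^sub>R x) = of_real c * cinner v x"
  by (simp add: cinner_def sum_distrib_left scR mult.left_commute)

lemma cnjsq: "cnj z * z = of_real ((cmod z)\<^sup>2)"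
  by (subst mult.commute) (rule complex_norm_square[symmetric])

lemma cinner_self: "cinner v v = of_real ((norm v)\<^sup>2)"
proof -
  have "cinner v v = (\<Sum>i\<in>UNIV. of_real ((cmod (v $ i))\<^sup>2))"
    unfolding cinner_def by (intro sum.cong refl cnjsq)
  also have "\<dots> = of_real (\<Sum>i\<in>UNIV. (norm (v $ i))\<^sup>2)" by simp
  also have "(\<Sum>i\<in>UNIV. (norm (v $ i))\<^sup>2) = (norm v)\<^sup>2"
    by (simp add: norm_vec_def L2_set_def sum_nonneg)
  finally show ?thesis .
qed

lemma cinner_adj: "cinner v (adj A *v w) = cinner (A *v v) w"
proof -
  have "cinner v (adj A *v w) = (\<Sum>i\<in>UNIV. \<Sum>j\<in>UNIV. cnj (v $ i) * (cnj (A $ j $ i) * w $ j))"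
    by (simp add: cinner_def adj_def matrix_vector_mult_def sum_distrib_left)
  also have "\<dots> = (\<Sum>j\<in>UNIV. \<Sum>i\<in>UNIV. cnj (v $ i) * (cnj (A $ j $ i) * w $ j))"
    by (rule sum.swap)
  also have "\<dots> = cinner (A *v v) w"
    by (simp add: cinner_def matrix_vector_mult_def sum_distrib_right sum_distrib_left mult_ac)
  finally show ?thesis .
qed

lemma cinner_cs: "cmod (cinner v w) \<le> norm v * norm w"
proof -
  let ?a = "(\<chi> i. cmod (v $ i)) :: real ^ 'a"
  let ?b = "(\<chi> i. cmod (w $ i)) :: real ^ 'a"
  have "cmod (cinner v w) \<le> (\<Sum>i\<in>UNIV. cmod (cnj (v $ i) * w $ i))"
    unfolding cinner_def by (rule norm_sum)
  also have "\<dots> = inner ?a ?b" by (simp add: inner_vec_def norm_mult)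
  also have "\<dots> \<le> norm ?a * norm ?b" by (rule norm_cauchy_schwarz)
  also have "norm ?a = norm v" by (simp add: norm_vec_def)
  also have "norm ?b = norm w" by (simp add: norm_vec_def)
  finally show ?thesis .
qed

lemma sum_list_mvmult: "sum_list Ms *v v = sum_list (map (\<lambda>M. M *v v) Ms)"
  by (induction Ms) (auto simp: matrix_vector_mult_add_rdistrib)

lemma cinner_sum_list: "cinner v (sum_list xs) = sum_list (map (cinner v) xs)"
  by (induction xs) (auto simp: cinner_add_right cinner_zero_right)

lemma adj_scaleR: "adj (c *\<^sub>R A) = c *\<^sub>R adj A"
  by (simp add: adj_def vec_eq_iff scR)

lemma mmult_scaleR: "(c *\<^sub>R A) ** (d *\<^sub>R B) = (c * d) *\<^sub>R (A ** (B :: complex^'n^'n))"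
  by (simp add: matrix_matrix_mult_def vec_eq_iff scR sum_distrib_left mult_ac)

lemma mvmult_scaleR: "(c *\<^sub>R A) *v v = c *\<^sub>R (A *v (v :: complex^'n))"
  by (simp add: matrix_vector_mult_def vec_eq_iff scR sum_distrib_left mult_ac)

lemma sum_nth_list: "(\<Sum>b<length xs. f (xs ! b)) = sum_list (map f xs)"
  by (simp add: sum_list_sum_nth atLeast0LessThan)

lemma sum_list_scaleR': "sum_list (map ((*\<^sub>R) c) xs) = c *\<^sub>R sum_list (xs :: 'a::real_vector list)"
  by (induction xs) (auto simp: scaleR_right_distrib)

lemma cont_cinner: "continuous_on UNIV (\<lambda>\<psi>::'n::finite cvec. cinner \<psi> (A *v \<psi>))"
  unfolding cinner_def matrix_vector_mult_def
  by (intro continuous_intros)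

lemma pe_prob: "pure_ensemble \<mu> \<Longrightarrow> prob_space \<mu>"
  by (simp add: pure_ensemble_def)

lemma pe_meas: "pure_ensemble \<mu> \<Longrightarrow> f \<in> borel_measurable borel \<Longrightarrow> f \<in> borel_measurable \<mu>"
  unfolding pure_ensemble_def using measurable_cong_sets by blast

lemma pe_AE: "pure_ensemble \<mu> \<Longrightarrow> AE \<psi> in \<mu>. norm \<psi> = 1"
  by (simp add: pure_ensemble_def)

lemma integ_bounded:
  fixes f :: "'n::finite cvec \<Rightarrow> real"
  assumes pe: "pure_ensemble \<mu>" and m: "f \<in> borel_measurable borel"
    and b: "\<And>\<psi>. norm \<psi> = 1 \<Longrightarrow> \<bar>f \<psi>\<bar> \<le> B"
  shows "integrable \<mu> f"
proof -
  interpret prob_space \<mu> using pe by (rule pe_prob)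
  show ?thesis
  proof (rule integrable_const_bound[where B=B])
    show "AE x in \<mu>. norm (f x) \<le> B" using pe_AE[OF pe] by eventually_elim (simp add: b)
    show "f \<in> borel_measurable \<mu>" using pe m by (rule pe_meas)
  qed
qed

lemma cont_bounded:
  fixes f :: "'n::finite cvec \<Rightarrow> real"
  assumes "continuous_on UNIV f"
  shows "\<exists>B. \<forall>\<psi>. norm \<psi> = 1 \<longrightarrow> \<bar>f \<psi>\<bar> \<le> B"
proof -
  have "compact (f ` sphere 0 1)"
    by (rule compact_continuous_image) (auto intro: continuous_on_subset[OF assms])
  then have "bounded (f ` sphere 0 1)" by (rule compact_imp_bounded)
  then obtain B where "\<forall>x\<in>f ` sphere 0 1. norm x \<le> B" by (auto simp: bounded_iff)
  then have "\<forall>\<psi>. norm \<psi> = 1 \<longrightarrow> \<bar>f \<psi>\<bar> \<le> B" by auto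
  then show ?thesis by blast
qed

lemma integ_cont:
  fixes f :: "'n::finite cvec \<Rightarrow> real"
  assumes pe: "pure_ensemble \<mu>" and c: "continuous_on UNIV f"
  shows "integrable \<mu> f"
proof -
  obtain B where "\<forall>\<psi>. norm \<psi> = 1 \<longrightarrow> \<bar>f \<psi>\<bar> \<le> B" using cont_bounded[OF c] by blast
  then show ?thesis using integ_bounded[OF pe borel_measurable_continuous_onI[OF c]] by blast
qed

lemma cont_sum_list:
  assumes "\<And>x. x \<in> set xs \<Longrightarrow> continuous_on S (f x)"
  shows "continuous_on S (\<lambda>\<psi>. sum_list (map (\<lambda>x. f x \<psi>) xs) :: real)"
  using assms by (induction xs) (auto intro!: continuous_intros)

lemma integ_sum_list:
  fixes f :: "_ \<Rightarrow> _ \<Rightarrow> real"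
  assumes "\<And>x. x \<in> set xs \<Longrightarrow> integrable M (f x)"
  shows "integrable M (\<lambda>\<psi>. sum_list (map (\<lambda>x. f x \<psi>) xs)) \<and>
    (\<integral>\<psi>. sum_list (map (\<lambda>x. f x \<psi>) xs) \<partial>M) = sum_list (map (\<lambda>x. \<integral>\<psi>. f x \<psi> \<partial>M) xs)"
  using assms by (induction xs) auto

definition qq :: "'n::finite cvec \<Rightarrow> 'n cmat \<Rightarrow> real" where
  "qq \<psi> F = Re (cinner \<psi> (F *v \<psi>))"

definition Td :: "'n::finite cvec \<Rightarrow> 'n cmat list \<Rightarrow> real" where
  "Td \<psi> K = sum_list (map (\<lambda>A. (cmod (cinner \<psi> (A *v \<psi>)))\<^sup>2) K)"

lemma cont_qq: "continuous_on UNIV (\<lambda>\<psi>. qq \<psi> F)"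
  unfolding qq_def by (intro continuous_intros cont_cinner)

lemma cont_Td: "continuous_on UNIV (\<lambda>\<psi>. Td \<psi> K)"
  unfolding Td_def by (intro cont_sum_list continuous_intros cont_cinner)

lemma qq_sum_list: "qq \<psi> (sum_list Ms) = sum_list (map (qq \<psi>) Ms)"
  by (induction Ms) (auto simp: qq_def matrix_vector_mult_add_rdistrib cinner_add_right cinner_zero_right)

lemma qq_scale: "qq \<psi> (c *\<^sub>R F) = c * qq \<psi> F"
  by (simp add: qq_def mvmult_scaleR cinner_scaleR_right)

lemma qq_nonneg: "psd F \<Longrightarrow> qq \<psi> F \<ge> 0"
  by (simp add: qq_def psd_def)

lemma qq_one: "qq \<psi> (mat 1) = (norm \<psi>)\<^sup>2"
  by (simp add: qq_def cinner_self)

lemma mp_sum: "meas_proc Fs Ks \<Longrightarrow> sum_list (map (qq \<psi>) Fs) = (norm \<psi>)\<^sup>2"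
  by (metis meas_proc_def qq_one qq_sum_list)

lemma mp_le1:
  assumes mp: "meas_proc Fs Ks" and F: "F \<in> set Fs" and n: "norm \<psi> = 1"
  shows "qq \<psi> F \<le> 1"
proof -
  have nn: "\<And>x. x \<in> set (map (qq \<psi>) Fs) \<Longrightarrow> 0 \<le> x"
    using mp qq_nonneg unfolding meas_proc_def by auto
  have "qq \<psi> F \<in> set (map (qq \<psi>) Fs)" using F by simp
  then have "qq \<psi> F \<le> sum_list (map (qq \<psi>) Fs)" using nn by (rule Groups_List.member_le_sum_list)
  then show ?thesis using mp_sum[OF mp, of \<psi>] n by simp
qed

lemma Td_le: "norm \<psi> = 1 \<Longrightarrow> Td \<psi> K \<le> qq \<psi> (sum_list (map (\<lambda>A. adj A ** A) K))"
proof -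
  assume n: "norm \<psi> = 1"
  have "(cmod (cinner \<psi> (A *v \<psi>)))\<^sup>2 \<le> qq \<psi> (adj A ** A)" for A
  proof -
    have "cmod (cinner \<psi> (A *v \<psi>)) \<le> norm (A *v \<psi>)" using cinner_cs[of \<psi> "A *v \<psi>"] n by simp
    then have "(cmod (cinner \<psi> (A *v \<psi>)))\<^sup>2 \<le> (norm (A *v \<psi>))\<^sup>2" by (simp add: power_mono)
    also have "\<dots> = qq \<psi> (adj A ** A)"
      by (simp add: qq_def matrix_vector_mul_assoc[symmetric] cinner_adj cinner_self)
    finally show ?thesis .
  qed
  then have "Td \<psi> K \<le> sum_list (map (\<lambda>A. qq \<psi> (adj A ** A)) K)"
    unfolding Td_def by (rule sum_list_mono)
  also have "\<dots> = qq \<psi> (sum_list (map (\<lambda>A. adj A ** A) K))"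
    by (simp add: qq_sum_list o_def)
  finally show ?thesis .
qed

lemma ent_meas: "ent \<in> borel_measurable borel"
  unfolding ent_def by measurable

lemma ent_bound: "0 \<le> p \<Longrightarrow> p \<le> 1 \<Longrightarrow> 0 \<le> ent p \<and> ent p \<le> 1"
proof (cases "p = 0")
  case False
  assume p: "0 \<le> p" "p \<le> 1"
  then have pp: "p > 0" using False by simp
  have l0: "ln p \<le> 0" using p pp by simp
  have "ln (inverse p) \<le> inverse p - 1" using pp by (intro ln_le_minus_one) simp
  then have l1: "- ln p \<le> inverse p - 1" by (simp add: ln_inverse)
  have e: "ent p = - p * ln p" using False by (simp add: ent_def)
  have "0 \<le> - p * ln p" using pp l0 by (simp add: mult_nonneg_nonpos)
  moreover have "p * (- ln p) \<le> p * (inverse p - 1)" using l1 pp by (intro mult_left_mono) auto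
  then have "- p * ln p \<le> 1 - p" using pp by (simp add: right_diff_distrib)
  ultimately show ?thesis using e p by simp
qed (simp add: ent_def)

lemma ent_mult:
  assumes t: "t > 0" and p: "p \<ge> 0" shows "ent (t * p) = t * ent p + p * ent t"
proof (cases "p = 0")
  case True then show ?thesis by (simp add: ent_def)
next
  case False
  then have pp: "p > 0" using p by simp
  have "ln (t * p) = ln t + ln p" using t pp by (simp add: ln_mult)
  moreover have "t * p \<noteq> 0" "t \<noteq> 0" using t pp by auto
  ultimately have "ent (t * p) = - (t * p) * (ln t + ln p)" "ent p = - p * ln p" "ent t = - t * ln t"
    using False by (simp_all add: ent_def)
  then show ?thesis by (simp add: distrib_left)
qed

lemma ig_alt: "info_gain \<mu> Fs = sum_list (map (\<lambda>F. ent (\<integral>\<psi>. qq \<psi> F \<partial>\<mu>)) Fs)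
   - (\<integral>\<psi>. sum_list (map (\<lambda>F. ent (qq \<psi> F)) Fs) \<partial>\<mu>)"
  unfolding info_gain_def out_prob_def cond_prob_def qq_def[symmetric]
  using sum_nth_list[where xs=Fs and f="\<lambda>F. ent (\<integral>\<psi>. qq \<psi> F \<partial>\<mu>)"] sum_nth_list[where xs=Fs and f="\<lambda>F. ent (qq _ F)"]
  by simp

lemma avg_alt: "avg_disturbance \<mu> Ks = 1 - (\<integral>\<psi>. sum_list (map (Td \<psi>) Ks) \<partial>\<mu>)"
  unfolding avg_disturbance_def Td_def
  using sum_nth_list[where xs=Ks and f="\<lambda>K. sum_list (map (\<lambda>A. (cmod (cinner _ (A *v _)))\<^sup>2) K)"]
  by simp

lemma integ_qq: "pure_ensemble \<mu> \<Longrightarrow> integrable \<mu> (\<lambda>\<psi>. qq \<psi> F)"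
  by (rule integ_cont[OF _ cont_qq])

lemma integ_T: "pure_ensemble \<mu> \<Longrightarrow> integrable \<mu> (\<lambda>\<psi>. sum_list (map (Td \<psi>) Ks))"
  by (rule integ_cont) (auto intro!: cont_sum_list cont_Td)

lemma integ_S:
  assumes pe: "pure_ensemble \<mu>" and mp: "meas_proc Fs Ks"
  shows "integrable \<mu> (\<lambda>\<psi>. sum_list (map (\<lambda>F. ent (qq \<psi> F)) Fs))"
proof -
  have "integrable \<mu> (\<lambda>\<psi>. ent (qq \<psi> F))" if F: "F \<in> set Fs" for F
  proof (rule integ_bounded[OF pe, where B=1])
    show "(\<lambda>\<psi>. ent (qq \<psi> F)) \<in> borel_measurable borel"
      using measurable_compose[OF borel_measurable_continuous_onI[OF cont_qq] ent_meas] .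
    show "\<bar>ent (qq \<psi> F)\<bar> \<le> 1" if "norm \<psi> = 1" for \<psi>
      using ent_bound[of "qq \<psi> F"] qq_nonneg[of F \<psi>] mp_le1[OF mp F that] mp F
      by (auto simp: meas_proc_def)
  qed
  then show ?thesis using integ_sum_list[of Fs \<mu> "\<lambda>F \<psi>. ent (qq \<psi> F)"] by blast
qed

lemma int_one: "pure_ensemble \<mu> \<Longrightarrow> (\<integral>\<psi>. (1::real) \<partial>\<mu>) = 1"
  using pe_prob prob_space.prob_space by fastforce

lemma sumP: 
  assumes pe: "pure_ensemble \<mu>" and mp: "meas_proc Fs Ks"
  shows "sum_list (map (\<lambda>F. \<integral>\<psi>. qq \<psi> F \<partial>\<mu>) Fs) = 1"
proof -
  have "sum_list (map (\<lambda>F. \<integral>\<psi>. qq \<psi> F \<partial>\<mu>) Fs) = (\<integral>\<psi>. sum_list (map (qq \<psi>) Fs) \<partial>\<mu>)"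
    using integ_sum_list[of Fs \<mu> "\<lambda>F \<psi>. qq \<psi> F"] integ_qq[OF pe] by simp
  also have "\<dots> = (\<integral>\<psi>. 1 \<partial>\<mu>)"
    using pe_AE[OF pe] by (intro integral_cong_AE) (auto simp: mp_sum[OF mp] pe_meas[OF pe] 
        borel_measurable_continuous_onI cont_sum_list cont_qq elim!: eventually_mono)
  finally show ?thesis using int_one[OF pe] by simp
qed

lemma avg_nonneg:
  assumes pe: "pure_ensemble \<mu>" and mp: "meas_proc Fs Ks"
  shows "avg_disturbance \<mu> Ks \<ge> 0"
proof -
  have "sum_list (map (Td \<psi>) Ks) \<le> 1" if n: "norm \<psi> = 1" for \<psi>
  proof -
    have "sum_list (map (Td \<psi>) Ks) = (\<Sum>b<length Ks. Td \<psi> (Ks ! b))" by (simp add: sum_nth_list)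
    also have "\<dots> \<le> (\<Sum>b<length Ks. qq \<psi> (Fs ! b))"
    proof (rule sum_mono)
      fix b assume "b \<in> {..<length Ks}"
      then have "sum_list (map (\<lambda>A. adj A ** A) (Ks ! b)) = Fs ! b" using mp by (auto simp: meas_proc_def)
      then show "Td \<psi> (Ks ! b) \<le> qq \<psi> (Fs ! b)" using Td_le[OF n, of "Ks ! b"] by simp
    qed
    also have "\<dots> = sum_list (map (qq \<psi>) Fs)" using mp by (simp add: sum_nth_list meas_proc_def)
    also have "\<dots> = 1" using mp_sum[OF mp] n by simp
    finally show ?thesis .
  qed
  then have "(\<integral>\<psi>. sum_list (map (Td \<psi>) Ks) \<partial>\<mu>) \<le> (\<integral>\<psi>. 1 \<partial>\<mu>)"
  proof -
    interpret prob_space \<mu> using pe by (rule pe_prob)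
    show ?thesis using pe_AE[OF pe] integ_T[OF pe] \<open>\<And>\<psi>. norm \<psi> = 1 \<Longrightarrow> _\<close>
      by (intro integral_mono_AE) (auto elim!: eventually_mono)
  qed
  then show ?thesis using int_one[OF pe] by (simp add: avg_alt)
qed

lemma H_scale:
  assumes pe: "pure_ensemble \<mu>" and mp: "meas_proc Fs Ks" and c: "c > 0"
  shows "sum_list (map (\<lambda>F. ent (\<integral>\<psi>. qq \<psi> F \<partial>\<mu>)) (map ((*\<^sub>R) c) Fs))
     = c * sum_list (map (\<lambda>F. ent (\<integral>\<psi>. qq \<psi> F \<partial>\<mu>)) Fs) + ent c"
proof -
  have "sum_list (map (\<lambda>F. ent (\<integral>\<psi>. qq \<psi> F \<partial>\<mu>)) (map ((*\<^sub>R) c) Fs))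
     = sum_list (map (\<lambda>F. c * ent (\<integral>\<psi>. qq \<psi> F \<partial>\<mu>) + (\<integral>\<psi>. qq \<psi> F \<partial>\<mu>) * ent c) Fs)"
  proof (simp only: map_map, intro arg_cong[where f=sum_list] map_cong refl)
    fix F assume F: "F \<in> set Fs"
    have nn: "(\<integral>\<psi>. qq \<psi> F \<partial>\<mu>) \<ge> 0"
      using F mp by (intro integral_nonneg_AE AE_I2) (auto simp: meas_proc_def qq_nonneg)
    show "((\<lambda>F. ent (\<integral>\<psi>. qq \<psi> F \<partial>\<mu>)) \<circ> (*\<^sub>R) c) F
      = c * ent (\<integral>\<psi>. qq \<psi> F \<partial>\<mu>) + (\<integral>\<psi>. qq \<psi> F \<partial>\<mu>) * ent c"
      using ent_mult[OF c nn] by (simp add: qq_scale)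
  qed
  also have "\<dots> = c * sum_list (map (\<lambda>F. ent (\<integral>\<psi>. qq \<psi> F \<partial>\<mu>)) Fs)
      + ent c * sum_list (map (\<lambda>F. \<integral>\<psi>. qq \<psi> F \<partial>\<mu>) Fs)"
    by (simp add: sum_list_addf sum_list_const_mult mult.commute)
  finally show ?thesis using sumP[OF pe mp] by simp
qed

lemma S_scale:
  assumes mp: "meas_proc Fs Ks" and c: "c > 0" and n: "norm \<psi> = 1"
  shows "sum_list (map (\<lambda>F. ent (qq \<psi> F)) (map ((*\<^sub>R) c) Fs))
     = c * sum_list (map (\<lambda>F. ent (qq \<psi> F)) Fs) + ent c"
proof -
  have "sum_list (map (\<lambda>F. ent (qq \<psi> F)) (map ((*\<^sub>R) c) Fs))
     = sum_list (map (\<lambda>F. c * ent (qq \<psi> F) + qq \<psi> F * ent c) Fs)"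
  proof (simp only: map_map, intro arg_cong[where f=sum_list] map_cong refl)
    fix F assume F: "F \<in> set Fs"
    have nn: "qq \<psi> F \<ge> 0" using F mp by (auto simp: meas_proc_def qq_nonneg)
    show "((\<lambda>F. ent (qq \<psi> F)) \<circ> (*\<^sub>R) c) F = c * ent (qq \<psi> F) + qq \<psi> F * ent c"
      using ent_mult[OF c nn] by (simp add: qq_scale)
  qed
  also have "\<dots> = c * sum_list (map (\<lambda>F. ent (qq \<psi> F)) Fs) + ent c * sum_list (map (qq \<psi>) Fs)"
    by (simp add: sum_list_addf sum_list_const_mult mult.commute)
  finally show ?thesis using mp_sum[OF mp] n by simp
qed

lemma Td_scale: "Td \<psi> (map ((*\<^sub>R) s) K) = s\<^sup>2 * Td \<psi> K"
proof -
  have "Td \<psi> (map ((*\<^sub>R) s) K) = sum_list (map (\<lambda>A. s\<^sup>2 * (cmod (cinner \<psi> (A *v \<psi>)))\<^sup>2) K)"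
    by (simp add: Td_def o_def mvmult_scaleR cinner_scaleR_right norm_mult power_mult_distrib)
  then show ?thesis by (simp add: Td_def sum_list_const_mult)
qed

lemma T_scale: "sum_list (map (Td \<psi>) (map (map ((*\<^sub>R) s)) Ks)) = s\<^sup>2 * sum_list (map (Td \<psi>) Ks)"
  by (simp add: o_def Td_scale sum_list_const_mult)

lemma psd_scale: "c \<ge> 0 \<Longrightarrow> psd F \<Longrightarrow> psd (c *\<^sub>R F)"
  by (simp add: psd_def mvmult_scaleR cinner_scaleR_right)

lemma kraus_scale: "sum_list (map (\<lambda>A. adj A ** A) (map ((*\<^sub>R) s) K))
   = (s * s) *\<^sub>R sum_list (map (\<lambda>A. adj A ** A) K)"
  by (induction K) (auto simp: adj_scaleR mmult_scaleR scaleR_right_distrib)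

lemma kraus_scale': "sum_list (map ((\<lambda>A. adj A ** A) \<circ> (*\<^sub>R) s) K)
   = (s * s) *\<^sub>R sum_list (map (\<lambda>A. adj A ** A) K)"
  by (induction K) (auto simp: adj_scaleR mmult_scaleR scaleR_right_distrib)

lemma int_const: "pure_ensemble \<mu> \<Longrightarrow> (\<integral>\<psi>. (c::real) \<partial>\<mu>) = c"
  using pe_prob prob_space.prob_space by fastforce

lemma mix:
  assumes pe: "pure_ensemble \<mu>" and mp1: "meas_proc Fs1 Ks1" and mp2: "meas_proc Fs2 Ks2"
    and t0: "0 < t" and t1: "t < 1"
  defines "Fs \<equiv> map ((*\<^sub>R) t) Fs1 @ map ((*\<^sub>R) (1 - t)) Fs2"
    and "Ks \<equiv> map (map ((*\<^sub>R) (sqrt t))) Ks1 @ map (map ((*\<^sub>R) (sqrt (1 - t)))) Ks2"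
  shows "meas_proc Fs Ks \<and> info_gain \<mu> Fs = t * info_gain \<mu> Fs1 + (1 - t) * info_gain \<mu> Fs2
    \<and> avg_disturbance \<mu> Ks = t * avg_disturbance \<mu> Ks1 + (1 - t) * avg_disturbance \<mu> Ks2"
proof -
  have c2: "0 < 1 - t" using t1 by simp
  have st: "sqrt t * sqrt t = t" "sqrt (1 - t) * sqrt (1 - t) = 1 - t" using t0 t1 by auto
  have L1: "length Ks1 = length Fs1" and L2: "length Ks2 = length Fs2"
    using mp1 mp2 by (auto simp: meas_proc_def)
  have mp: "meas_proc Fs Ks"
    unfolding meas_proc_def
  proof (intro conjI allI impI ballI)
    fix F assume "F \<in> set Fs"
    then show "psd F" using mp1 mp2 t0 t1 unfolding Fs_def meas_proc_def
      by (auto intro!: psd_scale)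
  next
    show "sum_list Fs = mat 1" using mp1 mp2 unfolding Fs_def meas_proc_def
      by (simp add: sum_list_scaleR' scaleR_left_distrib[symmetric])
  next
    show "length Ks = length Fs" using L1 L2 by (simp add: Fs_def Ks_def)
  next
    fix b assume b: "b < length Fs"
    show "sum_list (map (\<lambda>A. adj A ** A) (Ks ! b)) = Fs ! b"
    proof (cases "b < length Fs1")
      case True
      then show ?thesis using mp1 L1 t0 unfolding Fs_def Ks_def meas_proc_def
        by (simp add: nth_append kraus_scale' st)
    next
      case False
      then have "b - length Fs1 < length Fs2" using b by (simp add: Fs_def)
      then show ?thesis using False mp2 L1 L2 t1 unfolding Fs_def Ks_def meas_proc_def
        by (simp add: nth_append kraus_scale' st)
    qed
  qed
  let ?S = "\<lambda>Fs \<psi>. sum_list (map (\<lambda>F. ent (qq \<psi> F)) Fs)"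
  let ?H = "\<lambda>Fs. sum_list (map (\<lambda>F. ent (\<integral>\<psi>. qq \<psi> F \<partial>\<mu>)) Fs)"
  have iS1: "integrable \<mu> (?S Fs1)" by (rule integ_S[OF pe mp1])
  have iS2: "integrable \<mu> (?S Fs2)" by (rule integ_S[OF pe mp2])
  have iS: "integrable \<mu> (?S Fs)" by (rule integ_S[OF pe mp])
  have "(\<integral>\<psi>. ?S Fs \<psi> \<partial>\<mu>) = (\<integral>\<psi>. (t * ?S Fs1 \<psi> + ent t) + ((1 - t) * ?S Fs2 \<psi> + ent (1 - t)) \<partial>\<mu>)"
  proof (rule integral_cong_AE)
    show "?S Fs \<in> borel_measurable \<mu>" using iS by auto
    show "(\<lambda>\<psi>. (t * ?S Fs1 \<psi> + ent t) + ((1 - t) * ?S Fs2 \<psi> + ent (1 - t))) \<in> borel_measurable \<mu>"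
      using iS1 iS2 by auto
    show "AE \<psi> in \<mu>. ?S Fs \<psi> = (t * ?S Fs1 \<psi> + ent t) + ((1 - t) * ?S Fs2 \<psi> + ent (1 - t))"
      using pe_AE[OF pe] proof eventually_elim
      case (elim \<psi>)
      show ?case unfolding Fs_def map_append sum_list_append
        using S_scale[OF mp1 t0 elim] S_scale[OF mp2 c2 elim] by simp
    qed
  qed
  also have "\<dots> = (t * (\<integral>\<psi>. ?S Fs1 \<psi> \<partial>\<mu>) + ent t) + ((1 - t) * (\<integral>\<psi>. ?S Fs2 \<psi> \<partial>\<mu>) + ent (1 - t))"
    using iS1 iS2 pe_prob[OF pe] prob_space.prob_space[OF pe_prob[OF pe]]
    by (simp add: prob_space.finite_measure finite_measure.integrable_const)
  finally have IS: "(\<integral>\<psi>. ?S Fs \<psi> \<partial>\<mu>) = (t * (\<integral>\<psi>. ?S Fs1 \<psi> \<partial>\<mu>) + ent t) + ((1 - t) * (\<integral>\<psi>. ?S Fs2 \<psi> \<partial>\<mu>) + ent (1 - t))" .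
  have IH: "?H Fs = (t * ?H Fs1 + ent t) + ((1 - t) * ?H Fs2 + ent (1 - t))"
    unfolding Fs_def map_append sum_list_append
    using H_scale[OF pe mp1 t0] H_scale[OF pe mp2 c2] by simp
  have info: "info_gain \<mu> Fs = t * info_gain \<mu> Fs1 + (1 - t) * info_gain \<mu> Fs2"
    unfolding ig_alt[of \<mu>] IH IS by (simp add: algebra_simps)
  let ?T = "\<lambda>Ks \<psi>. sum_list (map (Td \<psi>) Ks)"
  have pt: "?T Ks \<psi> = t * ?T Ks1 \<psi> + (1 - t) * ?T Ks2 \<psi>" for \<psi>
    unfolding Ks_def map_append sum_list_append T_scale using t0 t1 by simp
  have "(\<integral>\<psi>. ?T Ks \<psi> \<partial>\<mu>) = t * (\<integral>\<psi>. ?T Ks1 \<psi> \<partial>\<mu>) + (1 - t) * (\<integral>\<psi>. ?T Ks2 \<psi> \<partial>\<mu>)"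
    unfolding pt using integ_T[OF pe, of Ks1] integ_T[OF pe, of Ks2] by simp
  then have dist: "avg_disturbance \<mu> Ks = t * avg_disturbance \<mu> Ks1 + (1 - t) * avg_disturbance \<mu> Ks2"
    unfolding avg_alt[of \<mu>] by (simp add: algebra_simps)
  show ?thesis using mp info dist by blast
qed

lemma inf_comb:
  fixes S1 S2 :: "real set"
  assumes n1: "S1 \<noteq> {}" and n2: "S2 \<noteq> {}" and t0: "0 < t" and t1: "t < 1"
    and key: "\<And>x y. x \<in> S1 \<Longrightarrow> y \<in> S2 \<Longrightarrow> c \<le> t * x + (1 - t) * y"
  shows "c \<le> t * Inf S1 + (1 - t) * Inf S2"
proof -
  have "(c - t * Inf S1) / (1 - t) \<le> Inf S2"
  proof (rule cInf_greatest[OF n2])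
    fix y assume y: "y \<in> S2"
    have "(c - (1 - t) * y) / t \<le> Inf S1"
    proof (rule cInf_greatest[OF n1])
      fix x assume "x \<in> S1"
      then have "c \<le> t * x + (1 - t) * y" using key y by blast
      then show "(c - (1 - t) * y) / t \<le> x" using t0 by (simp add: field_simps)
    qed
    then show "(c - t * Inf S1) / (1 - t) \<le> y" using t0 t1 by (simp add: field_simps)
  qed
  then show ?thesis using t1 by (simp add: field_simps)
qed

theorem mainTheorem1:
  fixes \<mu> :: "('n::finite) cvec measure"
  assumes "pure_ensemble \<mu>"
  shows "convex (achievable_info \<mu>) \<and>
         (\<forall>I1\<in>achievable_info \<mu>. \<forall>I2\<in>achievable_info \<mu>. \<forall>t::real. 0 \<le> t \<and> t \<le> 1 \<longrightarrow>
            frontier \<mu> (t * I1 + (1 - t) * I2) \<le> t * frontier \<mu> I1 + (1 - t) * frontier \<mu> I2)"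
proof
  note pe = assms
  show "convex (achievable_info \<mu>)"
  proof (rule convexI)
    fix x y u v :: real
    assume x: "x \<in> achievable_info \<mu>" and y: "y \<in> achievable_info \<mu>"
      and u: "0 \<le> u" and v: "0 \<le> v" and uv: "u + v = 1"
    show "u *\<^sub>R x + v *\<^sub>R y \<in> achievable_info \<mu>"
    proof (cases "u = 0 \<or> v = 0")
      case True
      then show ?thesis using x y uv by auto
    next
      case False
      then have u0: "0 < u" and u1: "u < 1" using u v uv by auto
      obtain Fs1 Ks1 where m1: "meas_proc Fs1 Ks1" and e1: "x = info_gain \<mu> Fs1"
        using x unfolding achievable_info_def by blast
      obtain Fs2 Ks2 where m2: "meas_proc Fs2 Ks2" and e2: "y = info_gain \<mu> Fs2"
        using y unfolding achievable_info_def by blast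
      have vv: "v = 1 - u" using uv by simp
      from mix[OF pe m1 m2 u0 u1] obtain Fs Ks where
        "meas_proc Fs Ks" "info_gain \<mu> Fs = u * info_gain \<mu> Fs1 + (1 - u) * info_gain \<mu> Fs2"
        by blast
      then show ?thesis unfolding achievable_info_def e1 e2 vv real_scaleR_def by (intro CollectI exI[of _ Fs] exI[of _ Ks]) simp
    qed
  qed
next
  note pe = assms
  define S where "S I = {avg_disturbance \<mu> Ks | Fs Ks. meas_proc Fs Ks \<and> info_gain \<mu> Fs = I}" for I
  have fr: "frontier \<mu> I = Inf (S I)" for I by (simp add: frontier_def S_def)
  have bdd: "bdd_below (S I)" for I
    unfolding S_def by (rule bdd_belowI[where m=0]) (auto intro: avg_nonneg[OF pe])
  have ne: "S I \<noteq> {}" if "I \<in> achievable_info \<mu>" for I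
    using that unfolding S_def achievable_info_def by blast
  show "\<forall>I1\<in>achievable_info \<mu>. \<forall>I2\<in>achievable_info \<mu>. \<forall>t::real. 0 \<le> t \<and> t \<le> 1 \<longrightarrow>
            frontier \<mu> (t * I1 + (1 - t) * I2) \<le> t * frontier \<mu> I1 + (1 - t) * frontier \<mu> I2"
  proof (intro ballI allI impI)
    fix I1 I2 :: real and t :: real assume I1: "I1 \<in> achievable_info \<mu>" and I2: "I2 \<in> achievable_info \<mu>"
      and t: "0 \<le> t \<and> t \<le> 1"
    show "frontier \<mu> (t * I1 + (1 - t) * I2) \<le> t * frontier \<mu> I1 + (1 - t) * frontier \<mu> I2"
    proof (cases "t = 0 \<or> t = 1")
      case True then show ?thesis by auto
    next
      case False
      then have t0: "0 < t" and t1: "t < 1" using t by auto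
      show ?thesis unfolding fr
      proof (rule inf_comb[OF ne[OF I1] ne[OF I2] t0 t1])
        fix x y assume x: "x \<in> S I1" and y: "y \<in> S I2"
        obtain Fs1 Ks1 where m1: "meas_proc Fs1 Ks1" and i1: "info_gain \<mu> Fs1 = I1"
          and d1: "x = avg_disturbance \<mu> Ks1" using x unfolding S_def by blast
        obtain Fs2 Ks2 where m2: "meas_proc Fs2 Ks2" and i2: "info_gain \<mu> Fs2 = I2"
          and d2: "y = avg_disturbance \<mu> Ks2" using y unfolding S_def by blast
        from mix[OF pe m1 m2 t0 t1] obtain Fs Ks where
          "meas_proc Fs Ks" "info_gain \<mu> Fs = t * I1 + (1 - t) * I2"
          "avg_disturbance \<mu> Ks = t * x + (1 - t) * y"
          unfolding i1 i2 d1 d2 by blast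
        then have "t * x + (1 - t) * y \<in> S (t * I1 + (1 - t) * I2)"
          unfolding S_def by (intro CollectI exI[of _ Fs] exI[of _ Ks]) simp
        then show "Inf (S (t * I1 + (1 - t) * I2)) \<le> t * x + (1 - t) * y"
          by (rule cInf_lower[OF _ bdd])
      qed
    qed
  qed
qed

end
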